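(* Every strictly incoherent operation (SIO) acting on a single qutrit $\mathcal{H}_3$ admits a Kraus decomposition $\Phi(\rho)=\sum_{n=1}^N K_n\rho K_n^\dagger$ with at most $N=13$ strictly incoherent Kraus operators.
   Context: Fix an orthonormal basis $\{|i\rangle\}_{i=1}^d$ of $\mathcal{H}_d$. A state is incoherent if it is diagonal in this basis; let $\mathcal{I}$ denote the set of incoherent states. A Kraus operator $K$ is incoherent if $K\rho K^\dagger/\mathrm{Tr}[K\rho K^\dagger]\in\mathcal{I}$ for all $\rho\in\mathcal{I}$ with nonzero trace (equivalently, each column of $K$ has at most one nonzero entry). A completely positive trace-preserving map $\Phi$ is a strictly incoherent operation (SIO) if it has a Kraus representation $\Phi(\rho)=\sum_n K_n\rho K_n^\dagger$, $\sum_n K_n^\dagger K_n=I$, such that both every $K_n$ and every $K_n^\dagger$ are incoherent (equivalently, each row and each column of each $K_n$ has at most one nonzero entry); such $K_n$ are called strictly incoherent Kraus operators. *)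

theory Defs
  imports "HOL-Analysis.Analysis"
begin

text \<open>Operators on the qutrit H_3 are 3x3 complex matrices, written in the
fixed (computational) basis indexed by the finite type 3.\<close>

type_synonym qmat = "complex ^ 3 ^ 3"

definition cadj :: "qmat \<Rightarrow> qmat" where
  "cadj A = (\<chi> i j. cnj (A $ j $ i))"

definition ctrace :: "qmat \<Rightarrow> complex" where
  "ctrace A = (\<Sum>i\<in>UNIV. A $ i $ i)"

definition diagonal_mat :: "qmat \<Rightarrow> bool" where
  "diagonal_mat A \<longleftrightarrow> (\<forall>i j. i \<noteq> j \<longrightarrow> A $ i $ j = 0)"

definition density_matrix :: "qmat \<Rightarrow> bool" where
  "density_matrix \<rho> \<longleftrightarrow> cadj \<rho> = \<rho> \<and>
     (\<forall>v :: complex ^ 3. Im (\<Sum>i\<in>UNIV. cnj (v $ i) * (\<rho> *v v) $ i) = 0 \<and>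
                         Re (\<Sum>i\<in>UNIV. cnj (v $ i) * (\<rho> *v v) $ i) \<ge> 0) \<and>
     ctrace \<rho> = 1"

definition incoherent_state :: "qmat \<Rightarrow> bool" where
  "incoherent_state \<rho> \<longleftrightarrow> density_matrix \<rho> \<and> diagonal_mat \<rho>"

definition incoherent_kraus :: "qmat \<Rightarrow> bool" where
  "incoherent_kraus K \<longleftrightarrow>
     (\<forall>\<rho>. incoherent_state \<rho> \<longrightarrow> ctrace (K ** \<rho> ** cadj K) \<noteq> 0 \<longrightarrow>
        incoherent_state (\<chi> i j. (K ** \<rho> ** cadj K) $ i $ j / ctrace (K ** \<rho> ** cadj K)))"

definition strictly_incoherent_kraus :: "qmat \<Rightarrow> bool" where
  "strictly_incoherent_kraus K \<longleftrightarrow> incoherent_kraus K \<and> incoherent_kraus (cadj K)"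

definition kraus_rep :: "(qmat \<Rightarrow> qmat) \<Rightarrow> qmat list \<Rightarrow> bool" where
  "kraus_rep \<Phi> Ks \<longleftrightarrow>
     sum_list (map (\<lambda>K. cadj K ** K) Ks) = mat 1 \<and>
     (\<forall>\<rho>. \<Phi> \<rho> = sum_list (map (\<lambda>K. K ** \<rho> ** cadj K) Ks))"

definition SIO :: "(qmat \<Rightarrow> qmat) \<Rightarrow> bool" where
  "SIO \<Phi> \<longleftrightarrow> (\<exists>Ks. kraus_rep \<Phi> Ks \<and> (\<forall>K\<in>set Ks. strictly_incoherent_kraus K))"

end

theory Submission
  imports Defs "HOL-Combinatorics.Permutations"
begin


definition qf :: "qmat \<Rightarrow> complex ^ 3 \<Rightarrow> complex" where
  "qf M x = (\<Sum>a\<in>UNIV. cnj (x $ a) * (\<Sum>b\<in>UNIV. M $ a $ b * x $ b))"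

definition herm :: "qmat \<Rightarrow> bool" where
  "herm M \<longleftrightarrow> (\<forall>a b. cnj (M $ a $ b) = M $ b $ a)"

definition psd :: "qmat \<Rightarrow> bool" where
  "psd M \<longleftrightarrow> herm M \<and> (\<forall>x. 0 \<le> Re (qf M x))"

definition outer :: "complex ^ 3 \<Rightarrow> qmat" where
  "outer v = (\<chi> a b. v $ a * cnj (v $ b))"

definition Eii :: "3 \<Rightarrow> real \<Rightarrow> qmat" where
  "Eii i t = (\<chi> a b. if a = i \<and> b = i then of_real t else 0)"

definition good2 :: "qmat \<Rightarrow> bool" where
  "good2 M \<longleftrightarrow> (\<exists>v w. M = outer v + outer w)"

lemma cnj_if0: "cnj (if P then a else 0) = (if P then cnj a else 0)" by simp
lemma ifzR: "(if P then c else 0) * (y::complex) = (if P then c * y else 0)" by simp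
lemma ifzL: "(y::complex) * (if P then c else 0) = (if P then y * c else 0)" by simp

lemma qf_diff: "qf (M - N) x = qf M x - qf N x"
  by (simp add: qf_def algebra_simps sum_subtractf)

lemma qf_add: "qf (M + N) x = qf M x + qf N x"
  by (simp add: qf_def algebra_simps sum.distrib)

lemma qf_outer: "qf (outer v) x = (\<Sum>a\<in>UNIV. cnj (x $ a) * v $ a) * (\<Sum>b\<in>UNIV. cnj (v $ b) * x $ b)"
  unfolding qf_def outer_def sum_distrib_left sum_distrib_right
  by (subst sum.swap) (simp add: mult.assoc mult.left_commute)

lemma Re_mult_cnj_ge0: "0 \<le> Re (cnj z * z)"
  by (simp add: complex_mult_cnj)

lemma psd_outer: "psd (outer v)"
proof -
  have "herm (outer v)" by (simp add: herm_def outer_def)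
  moreover have "0 \<le> Re (qf (outer v) x)" for x
  proof -
    have "(\<Sum>a\<in>UNIV. cnj (x $ a) * v $ a) = cnj (\<Sum>b\<in>UNIV. cnj (v $ b) * x $ b)"
      by (simp add: mult.commute)
    then show ?thesis unfolding qf_outer by (simp only: Re_mult_cnj_ge0)
  qed
  ultimately show ?thesis by (simp add: psd_def)
qed

lemma herm_add: "herm M \<Longrightarrow> herm N \<Longrightarrow> herm (M + N)"
  by (simp add: herm_def)

lemma psd_add: "psd M \<Longrightarrow> psd N \<Longrightarrow> psd (M + N)"
  by (simp add: psd_def herm_add qf_add)

lemma psd_zero: "psd 0"
  by (simp add: psd_def herm_def qf_def)

lemma qf_Eii: "qf (Eii i t) x = of_real t * (cnj (x $ i) * x $ i)"
proof -
  have "(\<Sum>b\<in>UNIV. (if a = i \<and> b = i then complex_of_real t else 0) * x $ b)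
      = (if a = i then of_real t * x $ i else 0)" for a
    by (cases "a = i") (simp_all add: ifzR)
  then show ?thesis by (simp add: qf_def Eii_def ifzL)
qed

lemma psd_Eii: "0 \<le> t \<Longrightarrow> psd (Eii i t)"
  unfolding psd_def herm_def qf_Eii by (auto simp: Eii_def complex_mult_cnj mult.commute[of "cnj _"])

lemma herm_diag_real: "herm M \<Longrightarrow> M $ i $ i = of_real (Re (M $ i $ i))"
proof -
  assume "herm M"
  then have "cnj (M $ i $ i) = M $ i $ i" unfolding herm_def by blast
  then have "Im (M $ i $ i) = 0" by (simp add: complex_eq_iff)
  then show ?thesis by (simp add: complex_eq_iff)
qed

lemma qf_two:
  assumes "i \<noteq> b"
  shows "qf M ((\<chi> c. if c = i then l else 0) + (\<chi> c. if c = b then m else 0)) =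
    cnj l * (M $ i $ i * l + M $ i $ b * m) + cnj m * (M $ b $ i * l + M $ b $ b * m)"
proof -
  have inner: "(\<Sum>c\<in>UNIV. M $ a $ c * ((if c = i then l else 0) + (if c = b then m else 0)))
      = M $ a $ i * l + M $ a $ b * m" for a
    by (simp add: distrib_left sum.distrib ifzL)
  show ?thesis
    unfolding qf_def using assms
    by (simp add: inner distrib_right sum.distrib ifzR cnj_if0)
qed

lemma psd_diag_zero_row:
  assumes "psd M" "M $ i $ i = 0"
  shows "M $ i $ b = 0"
proof (cases "b = i")
  case True then show ?thesis using assms by simp
next
  case False
  have h: "herm M" using assms by (simp add: psd_def)
  show ?thesis
  proof (rule ccontr)
    assume nz: "M $ i $ b \<noteq> 0"
    define z where "z = M $ i $ b"
    define s where "s = (\<bar>Re (M $ b $ b)\<bar> + 1) / (2 * (cmod z)^2)"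
    have zpos: "0 < (cmod z)^2" using nz z_def by simp
    define l where "l = - (of_real s * z)"
    have zz: "cnj z * z = of_real ((cmod z)^2)"
      by (metis complex_norm_square mult.commute)
    have "0 \<le> Re (qf M ((\<chi> c. if c = i then l else 0) + (\<chi> c. if c = b then 1 else 0)))"
      using assms by (simp add: psd_def)
    also have "qf M ((\<chi> c. if c = i then l else 0) + (\<chi> c. if c = b then 1 else 0))
        = cnj l * z + l * cnj z + M $ b $ b"
    proof -
      have hb: "M $ b $ i = cnj z" using h unfolding herm_def z_def by metis
      show ?thesis
        using qf_two[OF False[symmetric], of M l 1] assms(2) unfolding hb z_def[symmetric]
        by (simp add: algebra_simps)
    qed
    also have "cnj l * z + l * cnj z = - of_real (2 * s * (cmod z)^2)"
    proof -
      have c1: "cnj l * z = - (of_real s * (cnj z * z))" unfolding l_def by simp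
      have c2: "l * cnj z = - (of_real s * (cnj z * z))" unfolding l_def by (simp add: mult.commute mult.left_commute)
      show ?thesis unfolding c1 c2 zz by simp
    qed
    also have "Re (- of_real (2 * s * (cmod z)^2) + M $ b $ b) = - 2 * s * (cmod z)^2 + Re (M $ b $ b)"
      by simp
    also have "\<dots> = - (\<bar>Re (M $ b $ b)\<bar> + 1) + Re (M $ b $ b)"
      using zpos unfolding s_def by (simp add: field_simps)
    finally show False by linarith
  qed
qed

lemma qf_unit: "qf M (\<chi> c. if c = i then 1 else 0) = M $ i $ i"
  by (simp add: qf_def ifzL ifzR cnj_if0)

lemma psd_diag_nonneg: "psd M \<Longrightarrow> 0 \<le> Re (M $ i $ i)"
  unfolding psd_def by (metis qf_unit)

lemma qf_shift:
  "qf M (x + (\<chi> c. if c = i then \<beta> else 0)) = qf M x + \<beta> * (\<Sum>a\<in>UNIV. cnj (x $ a) * M $ a $ i)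
     + cnj \<beta> * (\<Sum>b\<in>UNIV. M $ i $ b * x $ b) + cnj \<beta> * \<beta> * M $ i $ i"
proof -
  have inner: "(\<Sum>b\<in>UNIV. M $ a $ b * (x $ b + (if b = i then \<beta> else 0)))
     = (\<Sum>b\<in>UNIV. M $ a $ b * x $ b) + M $ a $ i * \<beta>" for a
    by (simp add: distrib_left sum.distrib ifzL)
  define S where "S a = (\<Sum>b\<in>UNIV. M $ a $ b * x $ b)" for a
  have "qf M (x + (\<chi> c. if c = i then \<beta> else 0)) =
     (\<Sum>a\<in>UNIV. (cnj (x $ a) + (if a = i then cnj \<beta> else 0)) * (S a + M $ a $ i * \<beta>))"
    unfolding qf_def by (simp add: inner S_def cnj_if0)
  also have "\<dots> = (\<Sum>a\<in>UNIV. cnj (x $ a) * S a) + (\<Sum>a\<in>UNIV. cnj (x $ a) * M $ a $ i) * \<beta>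
      + (\<Sum>a\<in>UNIV. (if a = i then cnj \<beta> * (S a + M $ a $ i * \<beta>) else 0))"
    by (simp add: distrib_right distrib_left sum.distrib sum_distrib_right mult.assoc ifzR)
  also have "\<dots> = qf M x + \<beta> * (\<Sum>a\<in>UNIV. cnj (x $ a) * M $ a $ i)
     + cnj \<beta> * (\<Sum>b\<in>UNIV. M $ i $ b * x $ b) + cnj \<beta> * \<beta> * M $ i $ i"
    by (simp add: qf_def S_def algebra_simps)
  finally show ?thesis .
qed

lemma psd_step:
  assumes "psd M"
  shows "\<exists>v. psd (M - outer v) \<and> (\<forall>b. (M - outer v) $ i $ b = 0) \<and>
      (\<forall>j. (\<forall>b. M $ j $ b = 0) \<longrightarrow> (\<forall>b. (M - outer v) $ j $ b = 0))"
proof (cases "M $ i $ i = 0")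
  case True
  have "outer 0 = 0" by (simp add: outer_def vec_eq_iff)
  then show ?thesis using assms psd_diag_zero_row[OF assms True]
    by (intro exI[of _ 0]) simp
next
  case False
  have h: "herm M" using assms by (simp add: psd_def)
  define r where "r = Re (M $ i $ i)"
  have Mii: "M $ i $ i = of_real r" using herm_diag_real[OF h] r_def by simp
  have "r \<noteq> 0" using False Mii by auto
  then have rpos: "0 < r" using psd_diag_nonneg[OF assms, of i] r_def by linarith
  define v where "v = (\<chi> a. M $ a $ i / of_real (sqrt r))"
  have sq: "of_real (sqrt r) * of_real (sqrt r) = (of_real r :: complex)"
    using rpos by (simp add: of_real_mult[symmetric] del: of_real_mult)
  have hc: "cnj (M $ a $ b) = M $ b $ a" for a b using h unfolding herm_def by simp
  have ov: "outer v = (\<chi> a b. M $ a $ i * M $ i $ b / M $ i $ i)"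
    unfolding outer_def v_def vec_eq_iff using sq
    by (simp add: hc Mii mult_divide_mult_cancel_left field_simps)
  define w where "w x = (\<Sum>b\<in>UNIV. M $ i $ b * x $ b)" for x
  have row: "(M - outer v) $ i $ b = 0" for b
    unfolding ov using False by simp
  have rowj: "(\<forall>b. M $ j $ b = 0) \<longrightarrow> (\<forall>b. (M - outer v) $ j $ b = 0)" for j
  proof (intro impI allI)
    fix b assume "\<forall>b. M $ j $ b = 0"
    moreover then have "M $ j $ i = 0" by simp
    ultimately show "(M - outer v) $ j $ b = 0" unfolding ov by simp
  qed
  have hermN: "herm (M - outer v)"
    unfolding herm_def ov using h Mii by (simp add: hc)
  have qfN: "qf (outer v) x = cnj (w x) * w x / M $ i $ i" for x
  proof -
    have "qf (outer v) x = (\<Sum>a\<in>UNIV. cnj (x $ a) * M $ a $ i) * w x / M $ i $ i"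
      unfolding ov qf_def w_def
      apply (simp add: sum_distrib_left sum_distrib_right sum_divide_distrib mult.assoc mult.left_commute)
      apply (rule sum.swap)
      done
    also have "(\<Sum>a\<in>UNIV. cnj (x $ a) * M $ a $ i) = cnj (w x)"
      unfolding w_def by (simp add: hc mult.commute)
    finally show ?thesis .
  qed
  have "0 \<le> Re (qf (M - outer v) x)" for x
  proof -
    define \<beta> where "\<beta> = - w x / M $ i $ i"
    have s1: "(\<Sum>a\<in>UNIV. cnj (x $ a) * M $ a $ i) = cnj (w x)"
      unfolding w_def by (simp add: hc mult.commute)
    have "qf M (x + (\<chi> c. if c = i then \<beta> else 0)) = qf M x - cnj (w x) * w x / M $ i $ i"
      unfolding qf_shift s1 w_def[symmetric] \<beta>_def using False Mii
      by (simp add: field_simps)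
    also have "\<dots> = qf (M - outer v) x" by (simp add: qf_diff qfN)
    finally show ?thesis using assms unfolding psd_def by metis
  qed
  then have "psd (M - outer v)" using hermN by (simp add: psd_def)
  then show ?thesis using row rowj by blast
qed

lemma three_split:
  fixes i :: 3
  shows "\<exists>j k. j \<noteq> i \<and> k \<noteq> i \<and> j \<noteq> k \<and> (\<forall>c. c = i \<or> c = j \<or> c = k)"
proof -
  have d: "(1::3) \<noteq> 2" "(1::3) \<noteq> 3" "(2::3) \<noteq> 3" by simp_all
  show ?thesis using exhaust_3[of i]
  proof (elim disjE)
    assume i1: "i = 1" show ?thesis unfolding i1 by (rule exI[of _ 2], rule exI[of _ 3]) (use d exhaust_3 in auto)
  next
    assume i1: "i = 2" show ?thesis unfolding i1 by (rule exI[of _ 1], rule exI[of _ 3]) (use d exhaust_3 in auto)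
  next
    assume i1: "i = 3" show ?thesis unfolding i1 by (rule exI[of _ 1], rule exI[of _ 2]) (use d exhaust_3 in auto)
  qed
qed

lemma psd_L2:
  assumes "psd M"
  shows "\<exists>v w t. 0 \<le> t \<and> M = outer v + outer w + Eii i t"
proof -
  obtain j k where jk: "j \<noteq> i" "k \<noteq> i" "j \<noteq> k" "\<forall>c. c = i \<or> c = j \<or> c = k"
    using three_split[of i] by blast
  obtain v where v: "psd (M - outer v)" "\<forall>b. (M - outer v) $ j $ b = 0"
    using psd_step[OF assms, of j] by blast
  obtain w where w: "psd (M - outer v - outer w)" "\<forall>b. (M - outer v - outer w) $ k $ b = 0"
     "\<forall>b. (M - outer v - outer w) $ j $ b = 0"
    using psd_step[OF v(1), of k] v(2) by blast
  define R where "R = M - outer v - outer w"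
  have hR: "herm R" using w(1) R_def by (simp add: psd_def)
  define t where "t = Re (R $ i $ i)"
  have t0: "0 \<le> t" using psd_diag_nonneg[OF w(1)] R_def t_def by simp
  have "R = Eii i t"
    unfolding vec_eq_iff Eii_def
  proof (intro allI)
    fix a b
    have Rj: "R $ j $ c = 0" "R $ k $ c = 0" for c using w R_def by auto
    have Rc: "R $ c $ j = 0" "R $ c $ k = 0" for c
      using hR Rj unfolding herm_def by (metis complex_cnj_zero)+
    show "R $ a $ b = (\<chi> a b. if a = i \<and> b = i then complex_of_real t else 0) $ a $ b"
    proof -
      have Rii: "R $ i $ i = of_real t" using herm_diag_real[OF hR, of i] t_def by simp
      have "a = i \<or> a = j \<or> a = k" "b = i \<or> b = j \<or> b = k" using jk(4) by auto
      then show ?thesis using Rj Rc Rii jk(1,2) by auto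
    qed
  qed
  then have "M = outer v + outer w + Eii i t" unfolding R_def by (simp add: algebra_simps)
  then show ?thesis using t0 by blast
qed

lemma outer_unit: "0 \<le> t \<Longrightarrow> outer (\<chi> c. if c = i then of_real (sqrt t) else 0) = Eii i t"
  unfolding outer_def Eii_def vec_eq_iff
  by (simp add: of_real_mult[symmetric] del: of_real_mult)

lemma psd_three:
  assumes "psd M"
  shows "\<exists>u v w. M = outer u + outer v + outer w"
  using psd_L2[OF assms, of 1] outer_unit by metis

lemma psd_reduce:
  assumes "psd M"
  shows "\<exists>t. 0 \<le> t \<and> good2 (M - Eii i t)"
proof -
  obtain v w t where "0 \<le> t" "M = outer v + outer w + Eii i t" using psd_L2[OF assms] by blast
  then show ?thesis unfolding good2_def by (intro exI[of _ t]) auto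
qed

lemma good2_psd: "good2 M \<Longrightarrow> psd M"
  unfolding good2_def using psd_add psd_outer by auto




definition PP :: "(3 \<Rightarrow> 3) set" where "PP = {p. inj p}"

definition psi_mat :: "(3 \<Rightarrow> 3) \<Rightarrow> qmat \<Rightarrow> qmat \<Rightarrow> qmat" where
  "psi_mat p M \<rho> = (\<chi> a b. \<Sum>i\<in>UNIV. \<Sum>j\<in>UNIV.
      if p i = a \<and> p j = b then M $ i $ j * \<rho> $ i $ j else 0)"

definition Psi :: "((3 \<Rightarrow> 3) \<Rightarrow> qmat) \<Rightarrow> qmat \<Rightarrow> qmat" where
  "Psi G \<rho> = (\<Sum>p\<in>PP. psi_mat p (G p) \<rho>)"

definition Dg :: "((3 \<Rightarrow> 3) \<Rightarrow> qmat) \<Rightarrow> 3 \<Rightarrow> complex" where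
  "Dg G i = (\<Sum>p\<in>PP. G p $ i $ i)"

definition valid :: "(qmat \<Rightarrow> qmat) \<Rightarrow> ((3 \<Rightarrow> 3) \<Rightarrow> qmat) \<Rightarrow> bool" where
  "valid \<Phi> G \<longleftrightarrow> (\<forall>p\<in>PP. psd (G p)) \<and> (\<forall>\<rho>. \<Phi> \<rho> = Psi G \<rho>) \<and> (\<forall>i. Dg G i = 1)"

definition bad :: "((3 \<Rightarrow> 3) \<Rightarrow> qmat) \<Rightarrow> (3 \<Rightarrow> 3) set" where
  "bad G = {p\<in>PP. \<not> good2 (G p)}"

lemma finite_PP: "finite PP" by simp

lemma finite_bad: "finite (bad G)" by (simp add: bad_def)

lemma ifadd0: "(if C then (x::complex) + y else 0) = (if C then x else 0) + (if C then y else 0)" by simp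
lemma ifneg0: "(if C then - (x::complex) else 0) = - (if C then x else 0)" by simp

lemma psi_mat_add: "psi_mat p (A + B) \<rho> = psi_mat p A \<rho> + psi_mat p B \<rho>"
  unfolding psi_mat_def vec_eq_iff
  by (simp add: distrib_right ifadd0 sum.distrib cong: if_cong)

lemma psi_mat_uminus: "psi_mat p (- A) \<rho> = - psi_mat p A \<rho>"
  unfolding psi_mat_def vec_eq_iff
  by (simp add: ifneg0 sum_negf cong: if_cong)

lemma psi_mat_zero: "psi_mat p 0 \<rho> = 0"
  unfolding psi_mat_def vec_eq_iff by (simp cong: if_cong)

lemma psi_mat_Eii: "psi_mat p (Eii i t) \<rho> = (\<chi> a b. if p i = a \<and> p i = b then of_real t * \<rho> $ i $ i else 0)"
proof -
  have "(\<Sum>k\<in>UNIV. \<Sum>j\<in>UNIV. if p k = a \<and> p j = b then Eii i t $ k $ j * \<rho> $ k $ j else 0)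
      = (if p i = a \<and> p i = b then of_real t * \<rho> $ i $ i else 0)" for a b
  proof -
    have "(\<Sum>j\<in>UNIV. if p k = a \<and> p j = b then Eii i t $ k $ j * \<rho> $ k $ j else 0)
        = (if k = i then (if p i = a \<and> p i = b then of_real t * \<rho> $ i $ i else 0) else 0)" for k
    proof -
      have e: "(\<lambda>j. if p k = a \<and> p j = b then Eii i t $ k $ j * \<rho> $ k $ j else 0) =
        (\<lambda>j. if j = i then (if k = i \<and> p i = a \<and> p i = b then of_real t * \<rho> $ i $ i else 0) else 0)"
        by (rule ext) (auto simp: Eii_def)
      show ?thesis by (subst e) simp
    qed
    then show ?thesis by simp
  qed
  then show ?thesis unfolding psi_mat_def vec_eq_iff by simp
qed

lemma psi_if: "psi_mat s (if s = p then X else 0) \<rho> = (if s = p then psi_mat p X \<rho> else 0)"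
  by (simp add: psi_mat_zero)

lemma comp_if: "(if s = p then X else 0) $ k $ k = (if s = p then X $ k $ k else (0::complex))"
  by simp

lemma push:
  assumes V: "valid \<Phi> G" and p: "p \<in> PP" and q: "q \<in> PP" and pq: "p \<noteq> q" and i: "p i = q i"
  shows "\<exists>G'. valid \<Phi> G' \<and> good2 (G' p) \<and> (\<forall>s. s \<noteq> p \<and> s \<noteq> q \<longrightarrow> G' s = G s)"
proof -
  have ps: "psd (G p)" "psd (G q)" using V p q by (auto simp: valid_def)
  obtain t where t: "0 \<le> t" "good2 (G p - Eii i t)" using psd_reduce[OF ps(1)] by blast
  define G' where "G' = G(p := G p - Eii i t, q := G q + Eii i t)"
  have G'p: "G' p = G p - Eii i t" using pq by (simp add: G'_def)
  have G'q: "G' q = G q + Eii i t" by (simp add: G'_def)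
  have G'e: "G' s = G s + (if s = p then - Eii i t else 0) + (if s = q then Eii i t else 0)" for s
    using pq by (auto simp: G'_def)
  have psd': "\<forall>s\<in>PP. psd (G' s)"
  proof
    fix s assume "s \<in> PP"
    show "psd (G' s)"
    proof (cases "s = p")
      case True then show ?thesis using G'p t good2_psd by simp
    next
      case False
      show ?thesis
      proof (cases "s = q")
        case True then show ?thesis using G'q ps psd_add psd_Eii t by simp
      next
        case False
        then show ?thesis using \<open>s \<noteq> p\<close> \<open>s \<in> PP\<close> V by (simp add: G'_def valid_def)
      qed
    qed
  qed
  have Psi': "Psi G' \<rho> = Psi G \<rho>" for \<rho>
  proof -
    have "Psi G' \<rho> = Psi G \<rho> + (\<Sum>s\<in>PP. psi_mat s (if s = p then - Eii i t else 0) \<rho>)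
        + (\<Sum>s\<in>PP. psi_mat s (if s = q then Eii i t else 0) \<rho>)"
      unfolding Psi_def G'e psi_mat_add sum.distrib by simp
    also have "(\<Sum>s\<in>PP. psi_mat s (if s = p then - Eii i t else 0) \<rho>) = - psi_mat p (Eii i t) \<rho>"
      using p by (simp add: psi_if psi_mat_uminus)
    also have "(\<Sum>s\<in>PP. psi_mat s (if s = q then Eii i t else 0) \<rho>) = psi_mat q (Eii i t) \<rho>"
      using q by (simp add: psi_if)
    also have "psi_mat q (Eii i t) \<rho> = psi_mat p (Eii i t) \<rho>"
      unfolding psi_mat_Eii i ..
    finally show ?thesis by simp
  qed
  have Dg': "Dg G' k = Dg G k" for k
  proof -
    have "Dg G' k = Dg G k + (\<Sum>s\<in>PP. (if s = p then - Eii i t else 0) $ k $ k)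
        + (\<Sum>s\<in>PP. (if s = q then Eii i t else 0) $ k $ k)"
      unfolding Dg_def G'e by (simp add: sum.distrib)
    also have "(\<Sum>s\<in>PP. (if s = p then - Eii i t else 0) $ k $ k) = - (Eii i t $ k $ k)"
      using p by (simp add: comp_if)
    also have "(\<Sum>s\<in>PP. (if s = q then Eii i t else 0) $ k $ k) = Eii i t $ k $ k"
      using q by (simp add: comp_if)
    finally show ?thesis by simp
  qed
  have "valid \<Phi> G'" using V psd' Psi' Dg' by (simp add: valid_def)
  moreover have "\<forall>s. s \<noteq> p \<and> s \<noteq> q \<longrightarrow> G' s = G s" by (simp add: G'_def)
  moreover have "good2 (G' p)" using G'p t by simp
  ultimately show ?thesis by blast
qed

lemma push_bad:
  assumes V: "valid \<Phi> G" and p: "p \<in> PP" and q: "q \<in> PP" and pq: "p \<noteq> q" and i: "p i = q i"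
  shows "\<exists>G'. valid \<Phi> G' \<and> bad G' \<subseteq> (bad G - {p}) \<union> {q} \<and> (\<forall>s. s \<noteq> p \<and> s \<noteq> q \<longrightarrow> G' s = G s)"
proof -
  obtain G' where G': "valid \<Phi> G'" "good2 (G' p)" "\<forall>s. s \<noteq> p \<and> s \<noteq> q \<longrightarrow> G' s = G s"
    using push[OF assms] by blast
  have "bad G' \<subseteq> (bad G - {p}) \<union> {q}"
    unfolding bad_def using G'(2,3) by auto
  then show ?thesis using G' by blast
qed


lemma inj_surj3: "inj (q::3\<Rightarrow>3) \<Longrightarrow> \<exists>k. q k = y"
  using finite_UNIV_inj_surj[of q] by (metis finite surj_def)

lemma find_r:
  assumes p: "p \<in> PP" and q: "q \<in> PP" and nc: "\<forall>i. p i \<noteq> q i"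
  shows "\<exists>r\<in>PP. r \<noteq> p \<and> r \<noteq> q \<and> (\<exists>i. p i = r i) \<and> (\<exists>j. q j = r j)"
proof -
  define i0 :: 3 where "i0 = 1"
  have iq: "inj q" "inj p" using p q by (auto simp: PP_def)
  obtain k where k: "q k = p i0" using inj_surj3[OF iq(1)] by blast
  have ki: "k \<noteq> i0" using k nc by metis
  obtain j' k' where jk: "j' \<noteq> i0" "k' \<noteq> i0" "j' \<noteq> k'" "\<forall>c. c = i0 \<or> c = j' \<or> c = k'"
    using three_split[of i0] by blast
  define j where "j = (if j' = k then k' else j')"
  have j: "j \<noteq> i0" "j \<noteq> k" using jk ki unfolding j_def by auto
  define r where "r c = (if c = i0 then p i0 else if c = k then q i0 else q c)" for c
  have "inj r"
    unfolding inj_def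
  proof (intro allI impI)
    fix c d assume e: "r c = r d"
    have qq: "q x = q y \<longleftrightarrow> x = y" for x y using iq(1) by (simp add: inj_eq)
    show "c = d"
      using e ki nc k unfolding r_def by (auto split: if_splits simp: qq, (metis qq)+)
  qed
  then have "r \<in> PP" by (simp add: PP_def)
  moreover have rj: "r j = q j" using j by (simp add: r_def)
  moreover have ri: "r i0 = p i0" by (simp add: r_def)
  moreover have "r \<noteq> p" using rj nc by metis
  moreover have "r \<noteq> q" using ri nc by metis
  moreover have "p i0 = r i0" unfolding r_def by simp
  moreover have "q j = r j" unfolding r_def using j by simp
  ultimately show ?thesis by blast
qed

lemma bad_sub: "bad G \<subseteq> PP" by (auto simp: bad_def)

lemma reduce:
  "valid \<Phi> G \<Longrightarrow> \<exists>G'. valid \<Phi> G' \<and> card (bad G') \<le> 1"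
proof (induction "card (bad G)" arbitrary: G rule: less_induct)
  case less
  show ?case
  proof (cases "card (bad G) \<le> 1")
    case True then show ?thesis using less.prems by blast
  next
    case False
    have fin: "finite (bad G)" by (rule finite_bad)
    obtain p where p: "p \<in> bad G" using False by fastforce
    have "card (bad G - {p}) \<ge> 1" using False p fin by simp
    then obtain q where q: "q \<in> bad G - {p}" by (metis card.empty ex_in_conv not_one_le_zero)
    have pP: "p \<in> PP" and qP: "q \<in> PP" and pq: "p \<noteq> q" using p q bad_sub by auto
    have cp: "card (bad G - {p}) < card (bad G)" by (rule card_Diff1_less[OF fin p])
    have cpq: "card ((bad G - {p, q}) \<union> {r}) < card (bad G)" for r
    proof -
      have "card ((bad G - {p, q}) \<union> {r}) \<le> card (bad G - {p, q}) + 1"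
        using card_Un_le[of "bad G - {p, q}" "{r}"] by simp
      moreover have "card (bad G - {p, q}) = card (bad G) - 2"
        using p q fin by (auto simp: card_Diff_subset)
      ultimately show ?thesis using False by linarith
    qed
    show ?thesis
    proof (cases "\<exists>i. p i = q i")
      case True
      then obtain i where "p i = q i" by blast
      from push_bad[OF less.prems pP qP pq this] obtain G1 where
        G1: "valid \<Phi> G1" "bad G1 \<subseteq> (bad G - {p}) \<union> {q}" by blast
      have "bad G1 \<subseteq> bad G - {p}" using G1(2) q by auto
      then have "card (bad G1) < card (bad G)" using cp fin by (meson card_mono finite_Diff le_less_trans)
      then show ?thesis using less.hyps G1(1) by blast
    next
      case False
      then obtain r where r: "r \<in> PP" "r \<noteq> p" "r \<noteq> q" "\<exists>i. p i = r i" "\<exists>j. q j = r j"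
        using find_r[OF pP qP] by blast
      obtain i where i: "p i = r i" using r by blast
      obtain j where j: "q j = r j" using r by blast
      from push_bad[OF less.prems pP r(1) r(2)[symmetric] i] obtain G1 where
        G1: "valid \<Phi> G1" "bad G1 \<subseteq> (bad G - {p}) \<union> {r}"
            "\<forall>s. s \<noteq> p \<and> s \<noteq> r \<longrightarrow> G1 s = G s" by blast
      show ?thesis
      proof (cases "r \<in> bad G1")
        case False
        then have "bad G1 \<subseteq> bad G - {p}" using G1(2) by auto
        then have "card (bad G1) < card (bad G)" using cp fin by (meson card_mono finite_Diff le_less_trans)
        then show ?thesis using less.hyps G1(1) by blast
      next
        case True
        from push_bad[OF G1(1) qP r(1) r(3)[symmetric] j] obtain G2 where
          G2: "valid \<Phi> G2" "bad G2 \<subseteq> (bad G1 - {q}) \<union> {r}" by blast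
        have "bad G2 \<subseteq> (bad G - {p, q}) \<union> {r}" using G2(2) G1(2) by auto
        then have "card (bad G2) \<le> card ((bad G - {p, q}) \<union> {r})"
          using fin by (intro card_mono) auto
        then have "card (bad G2) < card (bad G)" using cpq[of r] by linarith
        then show ?thesis using less.hyps G2(1) by blast
      qed
    qed
  qed
qed




definition Kmk :: "(3 \<Rightarrow> 3) \<Rightarrow> complex ^ 3 \<Rightarrow> qmat" where
  "Kmk p v = (\<chi> a i. if a = p i then v $ i else 0)"

definition dmat :: "qmat \<Rightarrow> qmat" where
  "dmat M = (\<chi> i j. if i = j then M $ i $ i else 0)"

definition col :: "qmat \<Rightarrow> 3 \<Rightarrow> complex ^ 3" where
  "col K i = (\<chi> a. K $ a $ i)"

lemma kraus_term: "Kmk p v ** \<rho> ** cadj (Kmk p v) = psi_mat p (outer v) \<rho>"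
proof -
  have "(\<Sum>j\<in>UNIV. (\<Sum>i\<in>UNIV. (if a = p i then v $ i else 0) * \<rho> $ i $ j) *
          (if b = p j then cnj (v $ j) else 0)) =
        (\<Sum>i\<in>UNIV. \<Sum>j\<in>UNIV. if p i = a \<and> p j = b then v $ i * cnj (v $ j) * \<rho> $ i $ j else 0)"
    for a b
  proof -
    have "(\<Sum>j\<in>UNIV. (\<Sum>i\<in>UNIV. (if a = p i then v $ i else 0) * \<rho> $ i $ j) *
          (if b = p j then cnj (v $ j) else 0)) =
          (\<Sum>j\<in>UNIV. \<Sum>i\<in>UNIV. (if a = p i then v $ i else 0) * \<rho> $ i $ j *
          (if b = p j then cnj (v $ j) else 0))"
      by (simp add: sum_distrib_right)
    also have "\<dots> = (\<Sum>i\<in>UNIV. \<Sum>j\<in>UNIV. (if a = p i then v $ i else 0) * \<rho> $ i $ j *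
          (if b = p j then cnj (v $ j) else 0))"
      by (rule sum.swap)
    also have "\<dots> = (\<Sum>i\<in>UNIV. \<Sum>j\<in>UNIV. if p i = a \<and> p j = b then v $ i * cnj (v $ j) * \<rho> $ i $ j else 0)"
      by (intro sum.cong refl) auto
    finally show ?thesis .
  qed
  then show ?thesis
    unfolding psi_mat_def Kmk_def matrix_matrix_mult_def cadj_def outer_def vec_eq_iff
    by (simp add: cnj_if0 cong: if_cong)
qed

lemma kraus_gram:
  assumes "inj p"
  shows "cadj (Kmk p v) ** Kmk p v = dmat (outer v)"
proof -
  have "(\<Sum>a\<in>UNIV. cnj (if a = p i then v $ i else 0) * (if a = p j then v $ j else 0)) =
        (if i = j then v $ i * cnj (v $ i) else 0)" for i j
  proof -
    have "(\<Sum>a\<in>UNIV. cnj (if a = p i then v $ i else 0) * (if a = p j then v $ j else 0)) =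
          (\<Sum>a\<in>UNIV. if a = p i then (if p i = p j then cnj (v $ i) * v $ j else 0) else 0)"
      by (intro sum.cong refl) auto
    also have "\<dots> = (if i = j then v $ i * cnj (v $ i) else 0)"
      using assms by (simp add: inj_eq mult.commute)
    finally show ?thesis .
  qed
  then show ?thesis
    unfolding dmat_def Kmk_def matrix_matrix_mult_def cadj_def outer_def vec_eq_iff
    by simp
qed

lemma scR: "(r *\<^sub>R M) $ a $ b = of_real r * (M $ a $ b :: complex)"
  by (simp only: vector_scaleR_component) (simp add: scaleR_conv_of_real)

lemma qf_zero: "qf 0 x = 0" by (simp add: qf_def)

lemma qf_sum: "finite S \<Longrightarrow> qf (sum f S) x = (\<Sum>i\<in>S. qf (f i) x)"
  by (induction S rule: finite_induct) (simp_all add: qf_add qf_zero)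

lemma qf_scaleR: "qf (r *\<^sub>R M) x = of_real r * qf M x"
  by (simp add: qf_def scR sum_distrib_left algebra_simps del: vector_scaleR_component)

lemma psd_scaleR: "0 \<le> r \<Longrightarrow> psd M \<Longrightarrow> psd (r *\<^sub>R M)"
  unfolding psd_def herm_def by (simp add: qf_scaleR scR del: vector_scaleR_component)

lemma psd_sum: "finite S \<Longrightarrow> (\<forall>i\<in>S. psd (f i)) \<Longrightarrow> psd (sum f S)"
  by (induction S rule: finite_induct) (simp_all add: psd_zero psd_add)

lemma herm_qf_real: "herm M \<Longrightarrow> cnj (qf M x) = qf M x"
proof -
  assume h: "herm M"
  have "cnj (qf M x) = (\<Sum>a\<in>UNIV. \<Sum>b\<in>UNIV. x $ a * (M $ b $ a * cnj (x $ b)))"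
    using h unfolding qf_def herm_def by (simp add: sum_distrib_left)
  also have "\<dots> = (\<Sum>b\<in>UNIV. \<Sum>a\<in>UNIV. x $ a * (M $ b $ a * cnj (x $ b)))"
    by (rule sum.swap)
  also have "\<dots> = qf M x"
    unfolding qf_def by (simp add: sum_distrib_left algebra_simps)
  finally show ?thesis .
qed

lemma real_of_cnj: "cnj z = z \<Longrightarrow> z = of_real (Re z)"
  by (simp add: complex_eq_iff)

lemma Mform:
  assumes diag: "diagonal_mat \<rho>" and r: "\<And>i. \<rho> $ i $ i = of_real (r i)"
  shows "K ** \<rho> ** cadj K = (\<Sum>i\<in>UNIV. r i *\<^sub>R outer (col K i))"
proof -
  have inner: "(\<Sum>i\<in>UNIV. K $ a $ i * \<rho> $ i $ j) = K $ a $ j * of_real (r j)" for a j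
  proof -
    have "(\<Sum>i\<in>UNIV. K $ a $ i * \<rho> $ i $ j) = (\<Sum>i\<in>UNIV. if i = j then K $ a $ j * of_real (r j) else 0)"
      using diag r unfolding diagonal_mat_def by (intro sum.cong refl) auto
    then show ?thesis by simp
  qed
  show ?thesis
    unfolding matrix_matrix_mult_def cadj_def vec_eq_iff col_def outer_def
    by (simp add: inner scR algebra_simps del: vector_scaleR_component)
qed

lemma col_incoh:
  assumes colc: "\<forall>i a b. K $ a $ i \<noteq> 0 \<longrightarrow> K $ b $ i \<noteq> 0 \<longrightarrow> a = b"
  shows "incoherent_kraus K"
  unfolding incoherent_kraus_def
proof (intro allI impI)
  fix \<rho> assume inc: "incoherent_state \<rho>"
  define M where "M = K ** \<rho> ** cadj K"
  assume trnz: "ctrace (K ** \<rho> ** cadj K) \<noteq> 0"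
  have dm: "density_matrix \<rho>" and dg: "diagonal_mat \<rho>" using inc by (auto simp: incoherent_state_def)
  have qfeq: "(\<Sum>i\<in>UNIV. cnj (v $ i) * (A *v v) $ i) = qf A v" for A v
    by (simp add: qf_def matrix_vector_mult_def)
  define r where "r i = Re (\<rho> $ i $ i)" for i
  have rr: "\<rho> $ i $ i = of_real (r i)" and r0: "0 \<le> r i" for i
  proof -
    have "Im (qf \<rho> (\<chi> c. if c = i then 1 else 0)) = 0" "0 \<le> Re (qf \<rho> (\<chi> c. if c = i then 1 else 0))"
      using dm unfolding density_matrix_def qfeq by auto
    then show "\<rho> $ i $ i = of_real (r i)" "0 \<le> r i" unfolding qf_unit r_def
      by (simp_all add: complex_eq_iff)
  qed
  have Mf: "M = (\<Sum>i\<in>UNIV. r i *\<^sub>R outer (col K i))"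
    unfolding M_def by (rule Mform[OF dg rr])
  have psdM: "psd M" unfolding Mf
    by (rule psd_sum) (simp_all add: psd_scaleR r0 psd_outer)
  have hM: "cnj (M $ a $ b) = M $ b $ a" for a b using psdM by (simp add: psd_def herm_def)
  have Mab: "M $ a $ b = (\<Sum>i\<in>UNIV. of_real (r i) * (K $ a $ i * cnj (K $ b $ i)))" for a b
    unfolding Mf by (simp add: outer_def col_def scR del: vector_scaleR_component)
  define T where "T = (\<Sum>a\<in>UNIV. \<Sum>i\<in>UNIV. r i * (cmod (K $ a $ i))^2)"
  have tr: "ctrace M = of_real T"
  proof -
    have "K $ a $ i * cnj (K $ a $ i) = of_real ((cmod (K $ a $ i))^2)" for a i
      by (metis complex_norm_square)
    then show ?thesis unfolding ctrace_def Mab T_def by simp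
  qed
  have T0: "0 \<le> T" unfolding T_def using r0 by (intro sum_nonneg) simp
  have Tne: "T \<noteq> 0" using trnz tr M_def by auto
  have Tpos: "0 < T" using T0 Tne by simp
  define X where "X = (\<chi> i j. M $ i $ j / ctrace M)"
  have "cadj X = X" unfolding X_def cadj_def vec_eq_iff tr by (simp add: hM)
  moreover have "Im (\<Sum>i\<in>UNIV. cnj (v $ i) * (X *v v) $ i) = 0 \<and>
      0 \<le> Re (\<Sum>i\<in>UNIV. cnj (v $ i) * (X *v v) $ i)" for v
  proof -
    have "qf X v = qf M v / of_real T"
      unfolding X_def tr qf_def by (simp add: sum_divide_distrib[symmetric] algebra_simps)
    also have "qf M v = of_real (Re (qf M v))"
      using herm_qf_real[of M v] psdM by (simp add: psd_def real_of_cnj)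
    finally have "qf X v = of_real (Re (qf M v) / T)" by simp
    moreover have "0 \<le> Re (qf M v)" using psdM by (simp add: psd_def)
    ultimately show ?thesis unfolding qfeq using Tpos by simp
  qed
  moreover have "ctrace X = 1"
    unfolding X_def ctrace_def using trnz M_def by (simp add: sum_divide_distrib[symmetric] ctrace_def)
  moreover have "diagonal_mat X"
    unfolding diagonal_mat_def X_def
  proof (intro allI impI)
    fix a b :: 3 assume ab: "a \<noteq> b"
    have "M $ a $ b = 0" unfolding Mab
    proof (rule sum.neutral, rule ballI)
      fix i :: 3
      have "K $ a $ i = 0 \<or> K $ b $ i = 0" using colc ab by blast
      then show "of_real (r i) * (K $ a $ i * cnj (K $ b $ i)) = 0" by auto
    qed
    then show "(\<chi> i j. M $ i $ j / ctrace M) $ a $ b = 0" by simp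
  qed
  ultimately show "incoherent_state (\<chi> i j. (K ** \<rho> ** cadj K) $ i $ j / ctrace (K ** \<rho> ** cadj K))"
    unfolding incoherent_state_def density_matrix_def M_def[symmetric] X_def[symmetric] by blast
qed




lemma sik_Kmk:
  assumes "inj p"
  shows "strictly_incoherent_kraus (Kmk p v)"
proof -
  have "incoherent_kraus (Kmk p v)"
    by (rule col_incoh) (auto simp: Kmk_def split: if_splits)
  moreover have "incoherent_kraus (cadj (Kmk p v))"
    by (rule col_incoh) (use assms in \<open>auto simp: Kmk_def cadj_def inj_eq split: if_splits\<close>)
  ultimately show ?thesis by (simp add: strictly_incoherent_kraus_def)
qed

lemma inc_Eii: "incoherent_state (Eii i 1)"
proof -
  have qfeq: "(\<Sum>k\<in>UNIV. cnj (v $ k) * (A *v v) $ k) = qf A v" for A v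
    by (simp add: qf_def matrix_vector_mult_def)
  have "cadj (Eii i 1) = Eii i 1" by (auto simp: cadj_def Eii_def vec_eq_iff)
  moreover have "Im (qf (Eii i 1) v) = 0 \<and> 0 \<le> Re (qf (Eii i 1) v)" for v
    by (simp add: qf_Eii complex_mult_cnj mult.commute[of "cnj _"])
  moreover have "ctrace (Eii i 1) = 1" by (simp add: ctrace_def Eii_def)
  moreover have "diagonal_mat (Eii i 1)" by (simp add: diagonal_mat_def Eii_def)
  ultimately show ?thesis unfolding incoherent_state_def density_matrix_def qfeq by simp
qed

lemma inc_col:
  assumes inc: "incoherent_kraus K" and ab: "a \<noteq> b"
  shows "K $ a $ i = 0 \<or> K $ b $ i = 0"
proof (rule ccontr)
  assume nz: "\<not> (K $ a $ i = 0 \<or> K $ b $ i = 0)"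
  define E where "E = Eii i 1"
  have dg: "diagonal_mat E" by (simp add: E_def diagonal_mat_def Eii_def)
  have M: "K ** E ** cadj K = (\<Sum>j\<in>UNIV. (if j = i then 1 else 0) *\<^sub>R outer (col K j))"
    by (rule Mform[OF dg]) (simp add: E_def Eii_def)
  also have "\<dots> = outer (col K i)"
    by (simp add: if_distrib[of "\<lambda>r. r *\<^sub>R _"] cong: if_cong)
  finally have M: "K ** E ** cadj K = outer (col K i)" .
  define T where "T = (\<Sum>x\<in>UNIV. (cmod (K $ x $ i))^2)"
  have tr: "ctrace (K ** E ** cadj K) = of_real T"
  proof -
    have "K $ x $ i * cnj (K $ x $ i) = of_real ((cmod (K $ x $ i))^2)" for x
      by (metis complex_norm_square)
    then show ?thesis unfolding M ctrace_def outer_def col_def T_def by simp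
  qed
  have "T \<noteq> 0"
  proof
    assume "T = 0"
    then have "\<forall>x\<in>UNIV. (cmod (K $ x $ i))^2 = 0" unfolding T_def
      by (subst sum_nonneg_eq_0_iff[symmetric]) auto
    then show False using nz by simp
  qed
  then have trnz: "ctrace (K ** E ** cadj K) \<noteq> 0" using tr by simp
  have "incoherent_state (\<chi> x y. (K ** E ** cadj K) $ x $ y / ctrace (K ** E ** cadj K))"
    using inc inc_Eii trnz unfolding incoherent_kraus_def E_def by blast
  then have "(K ** E ** cadj K) $ a $ b / ctrace (K ** E ** cadj K) = 0"
    using ab unfolding incoherent_state_def diagonal_mat_def by auto
  then have "K $ a $ i * cnj (K $ b $ i) = 0" using trnz unfolding M by (simp add: outer_def col_def)
  then show False using nz by simp
qed

lemma extend_inj: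
  fixes g :: "3 \<Rightarrow> 3"
  assumes "inj_on g S"
  shows "\<exists>p. inj p \<and> (\<forall>i\<in>S. p i = g i)"
proof -
  have "card (UNIV - S) = card (UNIV - g ` S)"
    using assms by (simp add: card_Diff_subset card_image)
  then obtain h where h: "bij_betw h (UNIV - S) (UNIV - g ` S)"
    using finite_same_card_bij[of "UNIV - S" "UNIV - g ` S"] by auto
  define p where "p i = (if i \<in> S then g i else h i)" for i
  have b1: "bij_betw p S (g ` S)"
    using assms unfolding bij_betw_def inj_on_def p_def by auto
  have b2: "bij_betw p (UNIV - S) (UNIV - g ` S)"
    using h by (rule bij_betw_cong[THEN iffD1, rotated]) (simp add: p_def)
  have "bij_betw p (S \<union> (UNIV - S)) (g ` S \<union> (UNIV - g ` S))"
    by (rule bij_betw_combine[OF b1 b2]) auto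
  then have "inj p" by (simp add: bij_betw_def)
  then show ?thesis by (auto simp: p_def)
qed

lemma sik_struct:
  assumes "strictly_incoherent_kraus K"
  shows "\<exists>p v. inj p \<and> K = Kmk p v"
proof -
  have c1: "K $ a $ i = 0 \<or> K $ b $ i = 0" if "a \<noteq> b" for a b i
    using inc_col[of K a b i] assms that by (simp add: strictly_incoherent_kraus_def)
  have c2: "K $ i $ a = 0 \<or> K $ i $ b = 0" if "a \<noteq> b" for a b i
    using inc_col[of "cadj K" a b i] assms that by (simp add: strictly_incoherent_kraus_def cadj_def)
  define S where "S = {i. \<exists>a. K $ a $ i \<noteq> 0}"
  define g where "g i = (SOME a. K $ a $ i \<noteq> 0)" for i
  have gS: "K $ g i $ i \<noteq> 0" if "i \<in> S" for i
    using that unfolding S_def g_def by (metis (mono_tags, lifting) mem_Collect_eq someI_ex)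
  have guniq: "a = g i" if "K $ a $ i \<noteq> 0" for a i
  proof -
    have "i \<in> S" using that S_def by auto
    then show ?thesis using gS c1 that by metis
  qed
  have "inj_on g S"
    unfolding inj_on_def using gS c2 by metis
  then obtain p where p: "inj p" "\<forall>i\<in>S. p i = g i" using extend_inj by blast
  have "K = Kmk p (\<chi> i. K $ p i $ i)"
    unfolding Kmk_def vec_eq_iff
  proof (intro allI)
    fix a i
    show "K $ a $ i = (\<chi> a i. if a = p i then (\<chi> i. K $ p i $ i) $ i else 0) $ a $ i"
    proof (cases "K $ a $ i = 0")
      case True then show ?thesis by auto
    next
      case False
      then have "i \<in> S" "a = g i" using guniq S_def by auto
      then show ?thesis using p by simp
    qed
  qed
  then show ?thesis using p by blast
qed




lemma psd_sum_list: "(\<forall>x\<in>set xs. psd x) \<Longrightarrow> psd (sum_list xs)"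
  by (induction xs) (simp_all add: psd_zero psd_add)

lemma sum_PP_if:
  "(\<forall>K\<in>set Ks. h K \<in> PP) \<Longrightarrow>
   (\<Sum>p\<in>PP. sum_list (map (\<lambda>K. if h K = p then F K else (0::qmat)) Ks)) = sum_list (map F Ks)"
proof (induction Ks)
  case Nil then show ?case by simp
next
  case (Cons K Ks)
  have "(\<Sum>p\<in>PP. sum_list (map (\<lambda>K. if h K = p then F K else (0::qmat)) (K # Ks))) =
        (\<Sum>p\<in>PP. if h K = p then F K else 0) + (\<Sum>p\<in>PP. sum_list (map (\<lambda>K. if h K = p then F K else (0::qmat)) Ks))"
    by (simp add: sum.distrib)
  also have "(\<Sum>p\<in>PP. if h K = p then F K else (0::qmat)) = F K"
    using Cons.prems by simp
  finally show ?case using Cons by simp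
qed

lemma psi_mat_sum_list: "psi_mat p (sum_list (map f xs)) \<rho> = sum_list (map (\<lambda>x. psi_mat p (f x) \<rho>) xs)"
  by (induction xs) (simp_all add: psi_mat_zero psi_mat_add)

lemma psi_if': "psi_mat p (if a = p then X else 0) \<rho> = (if a = p then psi_mat a X \<rho> else 0)"
  by (simp add: psi_mat_zero)

lemma sum_PP_psi:
  "(\<forall>K\<in>set Ks. h K \<in> PP) \<Longrightarrow>
   (\<Sum>p\<in>PP. psi_mat p (sum_list (map (\<lambda>K. if h K = p then F K else (0::qmat)) Ks)) \<rho>) =
   sum_list (map (\<lambda>K. psi_mat (h K) (F K) \<rho>) Ks)"
proof (induction Ks)
  case Nil then show ?case by (simp add: psi_mat_zero)
next
  case (Cons K Ks)
  have "(\<Sum>p\<in>PP. psi_mat p (sum_list (map (\<lambda>K. if h K = p then F K else (0::qmat)) (K # Ks))) \<rho>) =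
        (\<Sum>p\<in>PP. if h K = p then psi_mat (h K) (F K) \<rho> else 0) +
        (\<Sum>p\<in>PP. psi_mat p (sum_list (map (\<lambda>K. if h K = p then F K else (0::qmat)) Ks)) \<rho>)"
    by (simp add: sum.distrib psi_mat_add psi_if')
  also have "(\<Sum>p\<in>PP. if h K = p then psi_mat (h K) (F K) \<rho> else 0) = psi_mat (h K) (F K) \<rho>"
    using Cons.prems by simp
  finally show ?case using Cons by simp
qed

lemma dmat_add: "dmat (A + B) = dmat A + dmat B"
  by (simp add: dmat_def vec_eq_iff)

lemma dmat_zero: "dmat 0 = 0"
  by (simp add: dmat_def vec_eq_iff)

lemma dmat_sum_list: "dmat (sum_list (map f xs)) = sum_list (map (\<lambda>x. dmat (f x)) xs)"
  by (induction xs) (simp_all add: dmat_zero dmat_add)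

lemma sum_list_concat': "sum_list (concat xss) = sum_list (map sum_list (xss :: qmat list list))"
  by (induction xss) simp_all

lemma card_PP: "card PP = 6"
proof -
  have "PP = {p. p permutes (UNIV :: 3 set)}"
  proof (rule set_eqI)
    fix p :: "3 \<Rightarrow> 3"
    have "inj p \<longleftrightarrow> bij p" using finite_UNIV_inj_surj[of p] by (auto simp: bij_def)
    then show "p \<in> PP \<longleftrightarrow> p \<in> {p. p permutes UNIV}"
      by (simp add: PP_def permutes_univ bij_iff)
  qed
  moreover have "card {p. p permutes (UNIV :: 3 set)} = fact 3"
    by (rule card_permutations) simp_all
  ultimately show ?thesis by (simp add: numeral_3_eq_3)
qed

theorem theorem2:
  fixes \<Phi> :: "qmat \<Rightarrow> qmat"
  assumes "SIO \<Phi>"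
  shows "\<exists>Ks. length Ks \<le> 13 \<and> kraus_rep \<Phi> Ks \<and>
              (\<forall>K\<in>set Ks. strictly_incoherent_kraus K)"
proof -
  obtain Ks where Ks: "kraus_rep \<Phi> Ks" "\<forall>K\<in>set Ks. strictly_incoherent_kraus K"
    using assms by (auto simp: SIO_def)
  have "\<forall>K\<in>set Ks. \<exists>pv. inj (fst pv) \<and> K = Kmk (fst pv) (snd pv)"
  proof
    fix K assume "K \<in> set Ks"
    then obtain p v where "inj p" "K = Kmk p v" using sik_struct Ks(2) by blast
    then show "\<exists>pv. inj (fst pv) \<and> K = Kmk (fst pv) (snd pv)" by (intro exI[of _ "(p, v)"]) simp
  qed
  from bchoice[OF this] obtain f where f: "\<forall>K\<in>set Ks. inj (fst (f K)) \<and> K = Kmk (fst (f K)) (snd (f K))"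
    by blast
  define h where "h K = fst (f K)" for K
  define F where "F K = outer (snd (f K))" for K
  have hPP: "\<forall>K\<in>set Ks. h K \<in> PP" using f by (simp add: h_def PP_def)
  define G0 where "G0 p = sum_list (map (\<lambda>K. if h K = p then F K else 0) Ks)" for p
  have V0: "valid \<Phi> G0"
    unfolding valid_def
  proof (intro conjI allI ballI)
    fix p assume "p \<in> PP"
    show "psd (G0 p)" unfolding G0_def
      by (rule psd_sum_list) (auto simp: F_def psd_outer psd_zero)
  next
    fix \<rho>
    have "\<Phi> \<rho> = sum_list (map (\<lambda>K. K ** \<rho> ** cadj K) Ks)" using Ks(1) by (simp add: kraus_rep_def)
    also have "\<dots> = sum_list (map (\<lambda>K. psi_mat (h K) (F K) \<rho>) Ks)"
    proof (rule arg_cong[where f = sum_list], rule map_cong[OF refl])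
      fix K assume "K \<in> set Ks"
      then have "K = Kmk (h K) (snd (f K))" using f h_def by auto
      then show "K ** \<rho> ** cadj K = psi_mat (h K) (F K) \<rho>"
        unfolding F_def by (metis kraus_term)
    qed
    also have "\<dots> = Psi G0 \<rho>" unfolding Psi_def G0_def using sum_PP_psi[OF hPP] by simp
    finally show "\<Phi> \<rho> = Psi G0 \<rho>" .
  next
    fix i
    have "mat 1 = sum_list (map (\<lambda>K. cadj K ** K) Ks)" using Ks(1) by (simp add: kraus_rep_def)
    also have "\<dots> = sum_list (map (\<lambda>K. dmat (F K)) Ks)"
    proof (rule arg_cong[where f = sum_list], rule map_cong[OF refl])
      fix K assume K: "K \<in> set Ks"
      then have "K = Kmk (h K) (snd (f K))" "inj (h K)" using f h_def by auto
      then show "cadj K ** K = dmat (F K)"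
        unfolding F_def by (metis kraus_gram)
    qed
    also have "\<dots> = dmat (sum_list (map F Ks))" by (simp add: dmat_sum_list)
    finally have "(mat 1 :: qmat) $ i $ i = dmat (sum_list (map F Ks)) $ i $ i" by simp
    then have "(sum_list (map F Ks)) $ i $ i = 1" by (simp add: dmat_def mat_def)
    moreover have "Dg G0 i = (sum_list (map F Ks)) $ i $ i"
    proof -
      have "Dg G0 i = (\<Sum>p\<in>PP. G0 p) $ i $ i" by (simp add: Dg_def)
      also have "(\<Sum>p\<in>PP. G0 p) = sum_list (map F Ks)" unfolding G0_def by (rule sum_PP_if[OF hPP])
      finally show ?thesis .
    qed
    ultimately show "Dg G0 i = 1" by simp
  qed
  obtain G where G: "valid \<Phi> G" "card (bad G) \<le> 1" using reduce[OF V0] by blast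
  have "\<forall>p\<in>PP. \<exists>L. G p = sum_list (map outer L) \<and> length L \<le> (if p \<in> bad G then 3 else 2)"
  proof
    fix p assume pP: "p \<in> PP"
    show "\<exists>L. G p = sum_list (map outer L) \<and> length L \<le> (if p \<in> bad G then 3 else 2)"
    proof (cases "good2 (G p)")
      case True
      then obtain v w where "G p = outer v + outer w" by (auto simp: good2_def)
      then show ?thesis by (intro exI[of _ "[v, w]"]) simp
    next
      case False
      then have pb: "p \<in> bad G" using pP by (simp add: bad_def)
      have "psd (G p)" using G(1) pP by (simp add: valid_def)
      then obtain u v w where "G p = outer u + outer v + outer w" using psd_three by blast
      then show ?thesis using pb by (intro exI[of _ "[u, v, w]"]) (simp add: add.assoc)
    qed
  qed
  from bchoice[OF this] obtain L where L: "\<forall>p\<in>PP. G p = sum_list (map outer (L p)) \<and> length (L p) \<le> (if p \<in> bad G then 3 else 2)"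
    by blast
  obtain ps where ps: "set ps = PP" "distinct ps" using finite_distinct_list[OF finite_PP] by blast
  define Ks' where "Ks' = concat (map (\<lambda>p. map (Kmk p) (L p)) ps)"
  have len: "length Ks' \<le> 13"
  proof -
    have "length Ks' = sum_list (map (\<lambda>p. length (L p)) ps)"
      unfolding Ks'_def by (simp add: length_concat o_def)
    also have "\<dots> = (\<Sum>p\<in>PP. length (L p))" using ps by (simp add: sum_list_distinct_conv_sum_set)
    also have "\<dots> \<le> (\<Sum>p\<in>PP. 2 + (if p \<in> bad G then 1 else 0))"
      using L by (intro sum_mono) auto
    also have "\<dots> = 2 * card PP + (\<Sum>p\<in>PP. (if p \<in> bad G then 1 else 0))"
      by (subst sum.distrib) simp
    also have "(\<Sum>p\<in>PP. (if p \<in> bad G then 1 else 0)) = card {p \<in> PP. p \<in> bad G}"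
      by (simp add: sum.inter_filter[symmetric])
    also have "{p \<in> PP. p \<in> bad G} = bad G" using bad_sub by auto
    finally show ?thesis using G(2) card_PP by simp
  qed
  have sik: "\<forall>K\<in>set Ks'. strictly_incoherent_kraus K"
  proof
    fix K assume "K \<in> set Ks'"
    then obtain p v where "p \<in> PP" "K = Kmk p v" unfolding Ks'_def using ps(1) by auto
    then show "strictly_incoherent_kraus K" using sik_Kmk by (simp add: PP_def)
  qed
  have kr1: "sum_list (map (\<lambda>K. cadj K ** K) Ks') = mat 1"
  proof -
    have "sum_list (map (\<lambda>K. cadj K ** K) Ks') =
          sum_list (map (\<lambda>p. sum_list (map (\<lambda>v. cadj (Kmk p v) ** Kmk p v) (L p))) ps)"
      unfolding Ks'_def by (simp add: map_concat sum_list_concat' o_def)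
    also have "\<dots> = sum_list (map (\<lambda>p. dmat (G p)) ps)"
    proof (rule arg_cong[where f = sum_list], rule map_cong[OF refl])
      fix p assume "p \<in> set ps"
      then have "p \<in> PP" "inj p" using ps by (auto simp: PP_def)
      then show "sum_list (map (\<lambda>v. cadj (Kmk p v) ** Kmk p v) (L p)) = dmat (G p)"
        using L by (simp add: kraus_gram dmat_sum_list)
    qed
    also have "\<dots> = (\<Sum>p\<in>PP. dmat (G p))" using ps by (simp add: sum_list_distinct_conv_sum_set)
    also have "\<dots> = mat 1"
    proof -
      have "Dg G i = 1" for i using G(1) by (simp add: valid_def)
      then show ?thesis unfolding vec_eq_iff dmat_def mat_def Dg_def
        by (auto simp: if_distrib[of "\<lambda>x. x $ _"] cong: if_cong)
    qed
    finally show ?thesis .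
  qed
  have kr2: "\<Phi> \<rho> = sum_list (map (\<lambda>K. K ** \<rho> ** cadj K) Ks')" for \<rho>
  proof -
    have "\<Phi> \<rho> = Psi G \<rho>" using G(1) by (simp add: valid_def)
    also have "\<dots> = sum_list (map (\<lambda>p. psi_mat p (G p) \<rho>) ps)"
      unfolding Psi_def using ps by (simp add: sum_list_distinct_conv_sum_set)
    also have "\<dots> = sum_list (map (\<lambda>p. sum_list (map (\<lambda>v. Kmk p v ** \<rho> ** cadj (Kmk p v)) (L p))) ps)"
    proof (rule arg_cong[where f = sum_list], rule map_cong[OF refl])
      fix p assume "p \<in> set ps"
      then have "p \<in> PP" using ps by auto
      then show "psi_mat p (G p) \<rho> = sum_list (map (\<lambda>v. Kmk p v ** \<rho> ** cadj (Kmk p v)) (L p))"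
        using L by (simp add: kraus_term psi_mat_sum_list)
    qed
    also have "\<dots> = sum_list (map (\<lambda>K. K ** \<rho> ** cadj K) Ks')"
      unfolding Ks'_def by (simp add: map_concat sum_list_concat' o_def)
    finally show ?thesis .
  qed
  have "kraus_rep \<Phi> Ks'" using kr1 kr2 by (simp add: kraus_rep_def)
  then show ?thesis using len sik by blast
qed


end
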